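(* Let $R$ be a commutative ring. Every $GV$-torsion $R$-module is absolutely $w$-pure.
   Context: All rings are commutative with identity. A $GV$-ideal of $R$ is a finitely generated ideal $J$ of $R$ such that the natural homomorphism $R\to \mathrm{Hom}_R(J,R)$ is an isomorphism; $GV(R)$ denotes the set of $GV$-ideals of $R$. For an $R$-module $M$, $\mathrm{tor}_{GV}(M)=\{x\in M : Jx=0 \text{ for some } J\in GV(R)\}$; $M$ is $GV$-torsion if $\mathrm{tor}_{GV}(M)=M$. An $R$-module $A$ is absolutely $w$-pure if $\mathrm{Ext}^1_R(N,A)$ is a $GV$-torsion $R$-module for every finitely presented $R$-module $N$. *)

theory Defs
  imports Main "HOL.Modules" "HOL-Library.FuncSet"
begin

definition fg_ideal :: "'r::comm_ring_1 set \<Rightarrow> bool" where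
  "fg_ideal J \<longleftrightarrow> (\<exists>S. finite S \<and> J = {\<Sum>s\<in>S. c s * s | c. True})"

text \<open>Hom_R(J,R), functions represented extensionally on J.\<close>
definition Hom_ideal :: "'r::comm_ring_1 set \<Rightarrow> ('r \<Rightarrow> 'r) set" where
  "Hom_ideal J = {f. (\<forall>x\<in>J. \<forall>y\<in>J. f (x + y) = f x + f y)
                   \<and> (\<forall>r. \<forall>x\<in>J. f (r * x) = r * f x)
                   \<and> f \<in> extensional J}"

definition nat_hom_ideal :: "'r::comm_ring_1 set \<Rightarrow> 'r \<Rightarrow> ('r \<Rightarrow> 'r)" where
  "nat_hom_ideal J r = (\<lambda>x\<in>J. r * x)"

definition GV_ideal :: "'r::comm_ring_1 set \<Rightarrow> bool" where
  "GV_ideal J \<longleftrightarrow> fg_ideal J \<and> bij_betw (nat_hom_ideal J) UNIV (Hom_ideal J)"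

definition GV_torsion_on :: "'x set \<Rightarrow> 'x \<Rightarrow> ('r::comm_ring_1 \<Rightarrow> 'x \<Rightarrow> 'x) \<Rightarrow> bool" where
  "GV_torsion_on M z sc \<longleftrightarrow> (\<forall>x\<in>M. \<exists>J. GV_ideal J \<and> (\<forall>j\<in>J. sc j x = z))"

definition GV_torsion :: "('r::comm_ring_1 \<Rightarrow> 'm::ab_group_add \<Rightarrow> 'm) \<Rightarrow> bool" where
  "GV_torsion sc \<longleftrightarrow> GV_torsion_on UNIV 0 sc"

definition lincomb :: "('r \<Rightarrow> 'm \<Rightarrow> 'm) \<Rightarrow> 'r list \<Rightarrow> 'm list \<Rightarrow> 'm::ab_group_add" where
  "lincomb sc cs xs = sum_list (map2 sc cs xs)"

text \<open>N is finitely presented: finitely generated by xs, and the module of relations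
  among xs (a submodule of R^n, n = length xs) is finitely generated, by rels.\<close>
definition fin_presented :: "('r::comm_ring_1 \<Rightarrow> 'n::ab_group_add \<Rightarrow> 'n) \<Rightarrow> bool" where
  "fin_presented sc \<longleftrightarrow> module sc \<and>
     (\<exists>xs rels. module.span sc (set xs) = UNIV
        \<and> (\<forall>\<rho>\<in>set rels. length \<rho> = length xs \<and> lincomb sc \<rho> xs = 0)
        \<and> (\<forall>c. length c = length xs \<and> lincomb sc c xs = 0 \<longrightarrow>
             (\<exists>a. length a = length rels \<and>
                  c = map (\<lambda>i. \<Sum>k<length rels. a ! k * (rels ! k) ! i) [0..<length xs])))"

definition free_module :: "('r::comm_ring_1 \<Rightarrow> 'p::ab_group_add \<Rightarrow> 'p) \<Rightarrow> bool" where
  "free_module sc \<longleftrightarrow> module sc \<and> (\<exists>B. \<not> module.dependent sc B \<and> module.span sc B = UNIV)"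

text \<open>P2 --d2--> P1 --d1--> P0 --d0--> N --> 0 exact, with P0, P1, P2 free:
  the beginning of a free (hence projective) resolution of N.\<close>
definition free_resolution2 ::
  "('r::comm_ring_1 \<Rightarrow> 'p2::ab_group_add \<Rightarrow> 'p2) \<Rightarrow> ('p2 \<Rightarrow> 'p1) \<Rightarrow>
   ('r \<Rightarrow> 'p1::ab_group_add \<Rightarrow> 'p1) \<Rightarrow> ('p1 \<Rightarrow> 'p0) \<Rightarrow>
   ('r \<Rightarrow> 'p0::ab_group_add \<Rightarrow> 'p0) \<Rightarrow> ('p0 \<Rightarrow> 'n) \<Rightarrow>
   ('r \<Rightarrow> 'n::ab_group_add \<Rightarrow> 'n) \<Rightarrow> bool" where
  "free_resolution2 s2 d2 s1 d1 s0 d0 sN \<longleftrightarrow>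
     free_module s2 \<and> free_module s1 \<and> free_module s0 \<and>
     module_hom s2 s1 d2 \<and> module_hom s1 s0 d1 \<and> module_hom s0 sN d0 \<and>
     surj d0 \<and> range d1 = {x. d0 x = 0} \<and> range d2 = {x. d1 x = 0}"

definition ext1_cocycles ::
  "('p2 \<Rightarrow> 'p1) \<Rightarrow> ('r::comm_ring_1 \<Rightarrow> 'p1::ab_group_add \<Rightarrow> 'p1) \<Rightarrow>
   ('r \<Rightarrow> 'a::ab_group_add \<Rightarrow> 'a) \<Rightarrow> ('p1 \<Rightarrow> 'a) set" where
  "ext1_cocycles d2 s1 sA = {\<phi>. module_hom s1 sA \<phi> \<and> (\<forall>x. \<phi> (d2 x) = 0)}"

definition ext1_coboundaries ::
  "('p1 \<Rightarrow> 'p0) \<Rightarrow> ('r::comm_ring_1 \<Rightarrow> 'p0::ab_group_add \<Rightarrow> 'p0) \<Rightarrow>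
   ('r \<Rightarrow> 'a::ab_group_add \<Rightarrow> 'a) \<Rightarrow> ('p1 \<Rightarrow> 'a) set" where
  "ext1_coboundaries d1 s0 sA = {\<psi> \<circ> d1 | \<psi>. module_hom s0 sA \<psi>}"

text \<open>Ext^1_R(N,A) = cocycles / coboundaries, as a set of cosets,
  with zero element the coset of coboundaries and the induced scalar action.\<close>
definition ext1_coset :: "('p1 \<Rightarrow> 'a::ab_group_add) set \<Rightarrow> ('p1 \<Rightarrow> 'a) \<Rightarrow> ('p1 \<Rightarrow> 'a) set" where
  "ext1_coset Bd \<phi> = {(\<lambda>x. \<phi> x + \<beta> x) | \<beta>. \<beta> \<in> Bd}"

definition Ext1 ::
  "('p2 \<Rightarrow> 'p1) \<Rightarrow> ('r::comm_ring_1 \<Rightarrow> 'p1::ab_group_add \<Rightarrow> 'p1) \<Rightarrow> ('p1 \<Rightarrow> 'p0) \<Rightarrow>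
   ('r \<Rightarrow> 'p0::ab_group_add \<Rightarrow> 'p0) \<Rightarrow> ('r \<Rightarrow> 'a::ab_group_add \<Rightarrow> 'a) \<Rightarrow> ('p1 \<Rightarrow> 'a) set set" where
  "Ext1 d2 s1 d1 s0 sA =
     ext1_coset (ext1_coboundaries d1 s0 sA) ` ext1_cocycles d2 s1 sA"

definition Ext1_zero ::
  "('p1 \<Rightarrow> 'p0) \<Rightarrow> ('r::comm_ring_1 \<Rightarrow> 'p0::ab_group_add \<Rightarrow> 'p0) \<Rightarrow>
   ('r \<Rightarrow> 'a::ab_group_add \<Rightarrow> 'a) \<Rightarrow> ('p1 \<Rightarrow> 'a) set" where
  "Ext1_zero d1 s0 sA = ext1_coboundaries d1 s0 sA"

definition Ext1_scale ::
  "('p1 \<Rightarrow> 'p0) \<Rightarrow> ('r::comm_ring_1 \<Rightarrow> 'p0::ab_group_add \<Rightarrow> 'p0) \<Rightarrow>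
   ('r \<Rightarrow> 'a::ab_group_add \<Rightarrow> 'a) \<Rightarrow> 'r \<Rightarrow> ('p1 \<Rightarrow> 'a) set \<Rightarrow> ('p1 \<Rightarrow> 'a) set" where
  "Ext1_scale d1 s0 sA r C =
     {(\<lambda>x. sA r (\<phi> x) + \<beta> x) | \<phi> \<beta>. \<phi> \<in> C \<and> \<beta> \<in> ext1_coboundaries d1 s0 sA}"

text \<open>The modules N, P_i range over all types (free type variables).\<close>
definition abs_w_pure_wrt ::
  "('r::comm_ring_1 \<Rightarrow> 'a::ab_group_add \<Rightarrow> 'a) \<Rightarrow>
   ('r \<Rightarrow> 'p2::ab_group_add \<Rightarrow> 'p2) \<Rightarrow> ('p2 \<Rightarrow> 'p1) \<Rightarrow>
   ('r \<Rightarrow> 'p1::ab_group_add \<Rightarrow> 'p1) \<Rightarrow> ('p1 \<Rightarrow> 'p0) \<Rightarrow>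
   ('r \<Rightarrow> 'p0::ab_group_add \<Rightarrow> 'p0) \<Rightarrow> ('p0 \<Rightarrow> 'n) \<Rightarrow>
   ('r \<Rightarrow> 'n::ab_group_add \<Rightarrow> 'n) \<Rightarrow> bool" where
  "abs_w_pure_wrt sA s2 d2 s1 d1 s0 d0 sN \<longleftrightarrow>
     (fin_presented sN \<and> free_resolution2 s2 d2 s1 d1 s0 d0 sN \<longrightarrow>
      GV_torsion_on (Ext1 d2 s1 d1 s0 sA) (Ext1_zero d1 s0 sA) (Ext1_scale d1 s0 sA))"

end

theory Submission
  imports Defs
begin

definition ext_lin :: "('r::comm_ring_1 \<Rightarrow> 'p::ab_group_add \<Rightarrow> 'p) \<Rightarrow> ('r \<Rightarrow> 'm::ab_group_add \<Rightarrow> 'm) \<Rightarrow> 'p set \<Rightarrow> ('p \<Rightarrow> 'm) \<Rightarrow> 'p \<Rightarrow> 'm" where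
  "ext_lin s1 s2 B y x = (\<Sum>b\<in>{b. module.representation s1 B x b \<noteq> 0}. s2 (module.representation s1 B x b) (y b))"

lemma ext_lin_superset:
  assumes "module s1" "module s2" "finite T" "{b. module.representation s1 B x b \<noteq> 0} \<subseteq> T"
  shows "ext_lin s1 s2 B y x = (\<Sum>b\<in>T. s2 (module.representation s1 B x b) (y b))"
  unfolding ext_lin_def
  by (rule sum.mono_neutral_left) (use assms in \<open>auto simp: module.scale_zero_left\<close>)

lemma ext_lin_hom:
  assumes m1: "module s1" and m2: "module s2" and ind: "\<not> module.dependent s1 B" and sp: "module.span s1 B = UNIV"
  shows "module_hom s1 s2 (ext_lin s1 s2 B y)" and "\<And>b. b \<in> B \<Longrightarrow> ext_lin s1 s2 B y b = y b"
proof -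
  interpret M1: module s1 by fact
  interpret M2: module s2 by fact
  let ?R = "M1.representation B"
  have fin: "finite {b. ?R x b \<noteq> 0}" for x by (rule M1.finite_representation)
  show "module_hom s1 s2 (ext_lin s1 s2 B y)"
    unfolding module_hom_iff
  proof (intro conjI allI)
    fix x x'
    let ?T = "{b. ?R x b \<noteq> 0} \<union> {b. ?R x' b \<noteq> 0}"
    have radd: "?R (x + x') = (\<lambda>b. ?R x b + ?R x' b)"
      by (rule M1.representation_add) (use ind sp in auto)
    have "ext_lin s1 s2 B y (x + x') = (\<Sum>b\<in>?T. s2 (?R (x + x') b) (y b))"
      by (rule ext_lin_superset[OF m1 m2]) (use fin radd in auto)
    also have "\<dots> = (\<Sum>b\<in>?T. s2 (?R x b) (y b)) + (\<Sum>b\<in>?T. s2 (?R x' b) (y b))"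
      by (simp add: radd M2.scale_left_distrib sum.distrib)
    also have "\<dots> = ext_lin s1 s2 B y x + ext_lin s1 s2 B y x'"
      by (subst (1 2) ext_lin_superset[OF m1 m2]) (use fin in auto)
    finally show "ext_lin s1 s2 B y (x + x') = ext_lin s1 s2 B y x + ext_lin s1 s2 B y x'" .
  next
    fix c x
    have rs: "?R (s1 c x) = (\<lambda>b. c * ?R x b)"
      by (rule M1.representation_scale) (use ind sp in auto)
    have "ext_lin s1 s2 B y (s1 c x) = (\<Sum>b\<in>{b. ?R x b \<noteq> 0}. s2 (?R (s1 c x) b) (y b))"
      by (rule ext_lin_superset[OF m1 m2]) (use fin rs in auto)
    also have "\<dots> = s2 c (ext_lin s1 s2 B y x)"
      by (simp add: rs ext_lin_def M2.scale_sum_right)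
    finally show "ext_lin s1 s2 B y (s1 c x) = s2 c (ext_lin s1 s2 B y x)" .
  qed (fact m1 m2)+
  fix b assume b: "b \<in> B"
  have rb: "?R b = (\<lambda>v. if v = b then 1 else 0)"
    by (rule M1.representation_basis) (use ind b in auto)
  have "ext_lin s1 s2 B y b = (\<Sum>v\<in>{b}. s2 (?R b v) (y v))"
    by (rule ext_lin_superset[OF m1 m2]) (auto simp: rb)
  then show "ext_lin s1 s2 B y b = y b" by (simp add: rb)
qed

lemma lift_free:
  assumes fr: "free_module s" and hf: "module_hom s s2 f" and hh: "module_hom s1 s2 h"
    and rng: "\<And>x. f x \<in> range h"
  shows "\<exists>g. module_hom s s1 g \<and> (\<forall>x. h (g x) = f x)"
proof -
  obtain B where ind: "\<not> module.dependent s B" and sp: "module.span s B = UNIV" and m: "module s"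
    using fr unfolding free_module_def by auto
  have m1: "module s1" and m2: "module s2" using hh unfolding module_hom_iff by auto
  define y where "y b = (SOME z. h z = f b)" for b
  have hy: "h (y b) = f b" for b unfolding y_def using rng[of b] by (metis (mono_tags) imageE someI)
  define g where "g = ext_lin s s1 B y"
  have gh: "module_hom s s1 g" and gb: "\<And>b. b \<in> B \<Longrightarrow> g b = y b"
    using ext_lin_hom[OF m m1 ind sp] unfolding g_def by auto
  have "h (g x) = f x" for x
  proof -
    interpret MP: module_pair s s2 using m m2 by (simp add: module_pair_def)
    show ?thesis
      by (rule MP.module_hom_eq_on_span[where B=B])
         (use gh hh hf gb hy sp in \<open>auto intro: module_hom_compose[unfolded comp_def]\<close>)
  qed
  with gh show ?thesis by blast
qed

definition Iof :: "'r::comm_ring_1 set \<Rightarrow> 'r set" where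
  "Iof S = {\<Sum>s\<in>S. c s * s | c. True}"

lemma fg_ideal_Iof: "fg_ideal J \<longleftrightarrow> (\<exists>S. finite S \<and> J = Iof S)"
  unfolding fg_ideal_def Iof_def by simp

lemma Iof_I: "x = (\<Sum>s\<in>S. c s * s) \<Longrightarrow> x \<in> Iof S"
  unfolding Iof_def mem_Collect_eq by (intro exI[of _ c]) simp

lemma Iof_add: "x \<in> Iof S \<Longrightarrow> y \<in> Iof S \<Longrightarrow> x + y \<in> Iof S"
proof -
  assume "x \<in> Iof S" "y \<in> Iof S"
  then obtain c d where "x = (\<Sum>s\<in>S. c s * s)" "y = (\<Sum>s\<in>S. d s * s)" unfolding Iof_def by auto
  then have "x + y = (\<Sum>s\<in>S. (c s + d s) * s)" by (simp add: sum.distrib distrib_right)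
  then show ?thesis by (rule Iof_I)
qed

lemma Iof_mult: "x \<in> Iof S \<Longrightarrow> r * x \<in> Iof S"
proof -
  assume "x \<in> Iof S"
  then obtain c where "x = (\<Sum>s\<in>S. c s * s)" unfolding Iof_def by auto
  then have "r * x = (\<Sum>s\<in>S. (r * c s) * s)" by (simp add: sum_distrib_left mult.assoc)
  then show ?thesis by (rule Iof_I)
qed

lemma Iof_gen: "finite S \<Longrightarrow> s \<in> S \<Longrightarrow> s \<in> Iof S"
proof -
  assume "finite S" "s \<in> S"
  then have "s = (\<Sum>t\<in>S. (if t = s then 1 else 0) * t)"
  proof -
    have "(\<Sum>t\<in>S. (if t = s then 1 else 0) * t) = (\<Sum>t\<in>S. if t = s then t else 0)"
      by (rule sum.cong) auto
    then show ?thesis using \<open>finite S\<close> \<open>s \<in> S\<close> by simp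
  qed
  then show ?thesis by (rule Iof_I)
qed

lemma Iof_partial: "S' \<subseteq> S \<Longrightarrow> finite S \<Longrightarrow> (\<Sum>s\<in>S'. c s * s) \<in> Iof S"
proof -
  assume a: "S' \<subseteq> S" "finite S"
  have "(\<Sum>s\<in>S'. c s * s) = (\<Sum>s\<in>S. (if s \<in> S' then c s else 0) * s)"
  proof -
    have "(\<Sum>s\<in>S. (if s \<in> S' then c s else 0) * s) = (\<Sum>s\<in>S. if s \<in> S' then c s * s else 0)"
      by (rule sum.cong) auto
    also have "\<dots> = (\<Sum>s\<in>S \<inter> S'. c s * s)" using a(2) by (rule sum.inter_restrict[symmetric])
    also have "S \<inter> S' = S'" using a(1) by blast
    finally show ?thesis by simp
  qed
  then show ?thesis by (rule Iof_I)
qed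

lemma Hom_sum:
  assumes f: "f \<in> Hom_ideal (Iof S)" and fin: "finite S"
  shows "f (\<Sum>s\<in>S. c s * s) = (\<Sum>s\<in>S. c s * f s)"
proof -
  have hadd: "\<And>x y. x \<in> Iof S \<Longrightarrow> y \<in> Iof S \<Longrightarrow> f (x + y) = f x + f y"
    and hsc: "\<And>r x. x \<in> Iof S \<Longrightarrow> f (r * x) = r * f x"
    using f unfolding Hom_ideal_def by auto
  have "(\<Sum>s\<in>S. c s * f s) = f (\<Sum>s\<in>S. c s * s)"
    using fin subset_refl
  proof (induction S rule: finite_subset_induct')
    case empty
    have z: "(0::'a) \<in> Iof S" using Iof_partial[of "{}" S] fin by simp
    show ?case using hsc[OF z, of 0] by simp
  next
    case (insert x F)
    have xS: "x \<in> Iof S" using insert.hyps fin Iof_gen by blast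
    have FS: "(\<Sum>s\<in>F. c s * s) \<in> Iof S" using insert.hyps fin Iof_partial by blast
    have "f (\<Sum>s\<in>insert x F. c s * s) = f (c x * x + (\<Sum>s\<in>F. c s * s))" using insert.hyps by simp
    also have "\<dots> = f (c x * x) + f (\<Sum>s\<in>F. c s * s)"
      by (rule hadd[OF Iof_mult[OF xS] FS])
    also have "\<dots> = c x * f x + (\<Sum>s\<in>F. c s * f s)"
      using hsc[OF xS] insert.IH by simp
    also have "\<dots> = (\<Sum>s\<in>insert x F. c s * f s)" using insert.hyps by simp
    finally show ?case by simp
  qed
  then show ?thesis by simp
qed
lemma nat_hom_in: "nat_hom_ideal (Iof S) r \<in> Hom_ideal (Iof S)"
  unfolding nat_hom_ideal_def Hom_ideal_def
  by (auto simp: Iof_add Iof_mult distrib_left mult.left_commute)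

lemma GV_char:
  "GV_ideal J \<longleftrightarrow> (\<exists>S. finite S \<and> J = Iof S) \<and> (\<forall>r. (\<forall>x\<in>J. r * x = 0) \<longrightarrow> r = 0)
     \<and> (\<forall>f\<in>Hom_ideal J. \<exists>r. \<forall>x\<in>J. f x = r * x)"
proof (cases "\<exists>S. finite S \<and> J = Iof S")
  case False then show ?thesis unfolding GV_ideal_def fg_ideal_Iof by blast
next
  case True
  then obtain S where S: "finite S" "J = Iof S" by blast
  have eq: "nat_hom_ideal J r = nat_hom_ideal J r' \<longleftrightarrow> (\<forall>x\<in>J. (r - r') * x = 0)" for r r'
    unfolding nat_hom_ideal_def by (auto simp: restrict_def fun_eq_iff left_diff_distrib)
  have inj: "inj (nat_hom_ideal J) \<longleftrightarrow> (\<forall>r. (\<forall>x\<in>J. r * x = 0) \<longrightarrow> r = 0)"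
  proof
    assume i: "inj (nat_hom_ideal J)"
    show "\<forall>r. (\<forall>x\<in>J. r * x = 0) \<longrightarrow> r = 0"
    proof (intro allI impI)
      fix r assume "\<forall>x\<in>J. r * x = 0"
      then have "nat_hom_ideal J r = nat_hom_ideal J 0" using eq by simp
      then show "r = 0" using i by (meson injD)
    qed
  next
    assume "\<forall>r. (\<forall>x\<in>J. r * x = 0) \<longrightarrow> r = 0"
    then show "inj (nat_hom_ideal J)" unfolding inj_def using eq by force
  qed
  have im: "nat_hom_ideal J ` UNIV = Hom_ideal J \<longleftrightarrow> (\<forall>f\<in>Hom_ideal J. \<exists>r. \<forall>x\<in>J. f x = r * x)"
  proof
    assume h: "nat_hom_ideal J ` UNIV = Hom_ideal J"
    show "\<forall>f\<in>Hom_ideal J. \<exists>r. \<forall>x\<in>J. f x = r * x"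
    proof
      fix f assume "f \<in> Hom_ideal J"
      then obtain r where "f = nat_hom_ideal J r" using h by auto
      then show "\<exists>r. \<forall>x\<in>J. f x = r * x" unfolding nat_hom_ideal_def by auto
    qed
  next
    assume h: "\<forall>f\<in>Hom_ideal J. \<exists>r. \<forall>x\<in>J. f x = r * x"
    show "nat_hom_ideal J ` UNIV = Hom_ideal J"
    proof
      show "range (nat_hom_ideal J) \<subseteq> Hom_ideal J" using nat_hom_in S by blast
      show "Hom_ideal J \<subseteq> range (nat_hom_ideal J)"
      proof
        fix f assume f: "f \<in> Hom_ideal J"
        then obtain r where r: "\<forall>x\<in>J. f x = r * x" using h by blast
        have "f = nat_hom_ideal J r"
          using f r unfolding Hom_ideal_def nat_hom_ideal_def extensional_def
          by (auto simp: fun_eq_iff restrict_def)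
        then show "f \<in> range (nat_hom_ideal J)" by blast
      qed
    qed
  qed
  show ?thesis unfolding GV_ideal_def fg_ideal_Iof bij_betw_def using inj im True by blast
qed

lemma Iof_zero: "finite S \<Longrightarrow> 0 \<in> Iof S"
  using Iof_partial[of "{}" S] by simp

lemma Iof_sum: "finite S \<Longrightarrow> (\<And>i. i \<in> K \<Longrightarrow> g i \<in> Iof S) \<Longrightarrow> sum g K \<in> Iof S"
  by (induction K rule: infinite_finite_induct) (auto simp: Iof_zero Iof_add)

lemma GV_UNIV: "GV_ideal (UNIV :: 'r::comm_ring_1 set)"
proof -
  have U: "Iof {1::'r} = UNIV"
  proof -
    have "x \<in> Iof {1}" for x :: 'r by (rule Iof_I[where c="\<lambda>_. x"]) simp
    then show ?thesis by blast
  qed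
  have inj: "\<forall>r::'r. (\<forall>x\<in>UNIV. r * x = 0) \<longrightarrow> r = 0" by (metis UNIV_I mult.right_neutral)
  have hom: "\<forall>f\<in>Hom_ideal (UNIV::'r set). \<exists>r. \<forall>x\<in>UNIV. f x = r * x"
  proof
    fix f :: "'r \<Rightarrow> 'r" assume "f \<in> Hom_ideal UNIV"
    then have "f (x * 1) = x * f 1" for x unfolding Hom_ideal_def by blast
    then show "\<exists>r. \<forall>x\<in>UNIV. f x = r * x" by (metis mult.commute mult.right_neutral)
  qed
  show ?thesis unfolding GV_char using U[symmetric] inj hom by blast
qed

definition ideal_like :: "'r::comm_ring_1 set \<Rightarrow> bool" where
  "ideal_like I \<longleftrightarrow> 0 \<in> I \<and> (\<forall>x\<in>I. \<forall>y\<in>I. x + y \<in> I) \<and> (\<forall>r. \<forall>x\<in>I. r * x \<in> I)"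

lemma ideal_like_sum: "ideal_like I \<Longrightarrow> (\<And>i. i \<in> K \<Longrightarrow> g i \<in> I) \<Longrightarrow> sum g K \<in> I"
  unfolding ideal_like_def by (induction K rule: infinite_finite_induct) auto

lemma GV_mult:
  assumes G1: "GV_ideal J1" and G2: "GV_ideal J2"
  shows "\<exists>J. GV_ideal J \<and> (\<forall>I. ideal_like I \<and> (\<forall>a\<in>J1. \<forall>b\<in>J2. a * b \<in> I) \<longrightarrow> J \<subseteq> I)"
proof -
  obtain S1 where S1: "finite S1" "J1 = Iof S1"
    and inj1: "\<And>r. (\<forall>x\<in>J1. r * x = 0) \<Longrightarrow> r = 0"
    and hom1: "\<And>f. f \<in> Hom_ideal J1 \<Longrightarrow> \<exists>r. \<forall>x\<in>J1. f x = r * x"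
    using G1 unfolding GV_char by blast
  obtain S2 where S2: "finite S2" "J2 = Iof S2"
    and inj2: "\<And>r. (\<forall>x\<in>J2. r * x = 0) \<Longrightarrow> r = 0"
    and hom2: "\<And>f. f \<in> Hom_ideal J2 \<Longrightarrow> \<exists>r. \<forall>x\<in>J2. f x = r * x"
    using G2 unfolding GV_char by blast
  define S where "S = (\<lambda>(s, t). s * t) ` (S1 \<times> S2)"
  define J where "J = Iof S"
  have finS: "finite S" unfolding S_def using S1 S2 by simp
  have prod: "a * b \<in> J" if a: "a \<in> J1" and b: "b \<in> J2" for a b
  proof -
    obtain c where c: "a = (\<Sum>s\<in>S1. c s * s)" using a S1 unfolding Iof_def by auto
    obtain d where d: "b = (\<Sum>t\<in>S2. d t * t)" using b S2 unfolding Iof_def by auto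
    have "a * b = (\<Sum>s\<in>S1. \<Sum>t\<in>S2. (c s * d t) * (s * t))"
      unfolding c d sum_product by (simp add: ac_simps)
    also have "\<dots> \<in> J"
    proof -
      have st: "s * t \<in> Iof S" if "s \<in> S1" "t \<in> S2" for s t
        using that by (intro Iof_gen[OF finS]) (auto simp: S_def)
      show ?thesis unfolding J_def
        by (rule Iof_sum[OF finS], rule Iof_sum[OF finS], rule Iof_mult, rule st)
    qed
    finally show ?thesis .
  qed
  have Jsub: "J \<subseteq> I" if I: "ideal_like I" "\<forall>a\<in>J1. \<forall>b\<in>J2. a * b \<in> I" for I
  proof
    fix x assume "x \<in> J"
    then obtain c where c: "x = (\<Sum>u\<in>S. c u * u)" unfolding J_def Iof_def by auto
    have "u \<in> I" if u: "u \<in> S" for u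
    proof -
      obtain s t where st: "s \<in> S1" "t \<in> S2" "u = s * t" using u unfolding S_def by auto
      have "s \<in> J1" "t \<in> J2" using st S1 S2 Iof_gen by auto
      then show ?thesis using I(2) st by blast
    qed
    then show "x \<in> I" unfolding c using I(1)
      by (intro ideal_like_sum) (auto simp: ideal_like_def)
  qed
  have injJ: "r = 0" if r: "\<forall>x\<in>J. r * x = 0" for r
  proof -
    have "r * a = 0" if a: "a \<in> J1" for a
      using r prod[OF a] by (intro inj2) (simp add: mult.assoc)
    then show ?thesis by (intro inj1) auto
  qed
  have homJ: "\<exists>r. \<forall>x\<in>J. f x = r * x" if f: "f \<in> Hom_ideal J" for f
  proof -
    have fadd: "\<And>x y. x \<in> J \<Longrightarrow> y \<in> J \<Longrightarrow> f (x + y) = f x + f y"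
      and fsc: "\<And>r x. x \<in> J \<Longrightarrow> f (r * x) = r * f x"
      using f unfolding Hom_ideal_def by auto
    have ex: "\<exists>r. \<forall>y\<in>J2. f (a * y) = r * y" if a: "a \<in> J1" for a
    proof -
      have H: "restrict (\<lambda>y. f (a * y)) J2 \<in> Hom_ideal J2"
        unfolding Hom_ideal_def
      proof (intro CollectI conjI ballI allI)
        fix x y assume "x \<in> J2" "y \<in> J2"
        then show "restrict (\<lambda>y. f (a * y)) J2 (x + y) = restrict (\<lambda>y. f (a * y)) J2 x + restrict (\<lambda>y. f (a * y)) J2 y"
        proof -
          have "x + y \<in> J2" using \<open>x \<in> J2\<close> \<open>y \<in> J2\<close> S2 Iof_add by simp
          then show ?thesis using prod[OF a] fadd \<open>x \<in> J2\<close> \<open>y \<in> J2\<close> by (simp add: distrib_left)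
        qed
      next
        fix r x assume "x \<in> J2"
        then show "restrict (\<lambda>y. f (a * y)) J2 (r * x) = r * restrict (\<lambda>y. f (a * y)) J2 x"
        proof -
          have "r * x \<in> J2" using \<open>x \<in> J2\<close> S2 Iof_mult by simp
          then show ?thesis using prod[OF a] fsc[of "a * x" r] \<open>x \<in> J2\<close> by (simp add: mult.left_commute)
        qed
      qed simp
      from hom2[OF H] obtain r where "\<forall>x\<in>J2. restrict (\<lambda>y. f (a * y)) J2 x = r * x" by blast
      then show ?thesis by auto
    qed
    define R where "R a = (SOME r. \<forall>y\<in>J2. f (a * y) = r * y)" for a
    have R: "\<And>y. y \<in> J2 \<Longrightarrow> f (a * y) = R a * y" if "a \<in> J1" for a
      using someI_ex[OF ex[OF that]] unfolding R_def by blast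
    have "\<exists>r. \<forall>a\<in>J1. restrict R J1 a = r * a"
    proof (rule hom1)
      show "restrict R J1 \<in> Hom_ideal J1"
        unfolding Hom_ideal_def
      proof (intro CollectI conjI ballI allI)
        fix x y assume x: "x \<in> J1" and y: "y \<in> J1"
        have xy: "x + y \<in> J1" using x y S1 Iof_add by simp
        have "(R (x + y) - (R x + R y)) * z = 0" if z: "z \<in> J2" for z
        proof -
          have "R (x + y) * z = f ((x + y) * z)" using R[OF xy z] by simp
          also have "\<dots> = f (x * z) + f (y * z)" using fadd prod x y z by (simp add: distrib_right)
          also have "\<dots> = R x * z + R y * z" using R x y z by simp
          finally show ?thesis by (simp add: algebra_simps)
        qed
        then have "R (x + y) - (R x + R y) = 0" by (intro inj2) auto
        then show "restrict R J1 (x + y) = restrict R J1 x + restrict R J1 y" using x y xy by simp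
      next
        fix r x assume x: "x \<in> J1"
        have rx: "r * x \<in> J1" using x S1 Iof_mult by simp
        have "(R (r * x) - r * R x) * z = 0" if z: "z \<in> J2" for z
        proof -
          have "R (r * x) * z = f ((r * x) * z)" using R[OF rx z] by simp
          also have "\<dots> = r * f (x * z)" using fsc prod x z by (simp add: mult.assoc)
          also have "\<dots> = r * (R x * z)" using R x z by simp
          finally show ?thesis by (simp add: algebra_simps)
        qed
        then have "R (r * x) - r * R x = 0" by (intro inj2) auto
        then show "restrict R J1 (r * x) = r * restrict R J1 x" using x rx by simp
      qed simp
    qed
    then obtain r where r: "\<And>a. a \<in> J1 \<Longrightarrow> R a = r * a" by auto
    have fu: "f u = r * u" if u: "u \<in> S" for u
    proof -
      obtain s t where st: "s \<in> S1" "t \<in> S2" "u = s * t" using u unfolding S_def by auto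
      have "s \<in> J1" "t \<in> J2" using st S1 S2 Iof_gen by auto
      then show ?thesis using R r st by (simp add: mult.assoc)
    qed
    show ?thesis
    proof (intro exI ballI)
      fix x assume "x \<in> J"
      then obtain c where c: "x = (\<Sum>u\<in>S. c u * u)" unfolding J_def Iof_def by auto
      have "f x = (\<Sum>u\<in>S. c u * f u)" unfolding c by (rule Hom_sum[OF f[unfolded J_def] finS])
      also have "\<dots> = r * x" unfolding c sum_distrib_left using fu by (intro sum.cong) (auto simp: ac_simps)
      finally show "f x = r * x" .
    qed
  qed
  have "GV_ideal J" unfolding GV_char using finS J_def injJ homJ by blast
  then show ?thesis using Jsub by blast
qed

lemma GV_kill:
  assumes mA: "module sA" and tA: "GV_torsion (sA :: 'r::comm_ring_1 \<Rightarrow> 'a::ab_group_add \<Rightarrow> 'a)"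
    and fin: "finite F"
  shows "\<exists>J. GV_ideal J \<and> (\<forall>j\<in>J. \<forall>a\<in>F. sA j a = 0)"
  using fin
proof (induction F rule: finite_induct)
  case empty then show ?case using GV_UNIV by blast
next
  case (insert a F)
  interpret M: module sA by fact
  obtain J1 where J1: "GV_ideal J1" "\<forall>j\<in>J1. \<forall>b\<in>F. sA j b = 0" using insert.IH by blast
  obtain J2 where J2: "GV_ideal J2" "\<forall>j\<in>J2. sA j a = 0"
    using tA unfolding GV_torsion_def GV_torsion_on_def by blast
  define I where "I = {r. \<forall>b\<in>insert a F. sA r b = 0}"
  have IL: "ideal_like I" unfolding ideal_like_def I_def
    by (auto simp: M.scale_left_distrib simp flip: M.scale_scale)
  have pr: "\<forall>x\<in>J1. \<forall>y\<in>J2. x * y \<in> I"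
  proof (intro ballI)
    fix x y assume x: "x \<in> J1" and y: "y \<in> J2"
    have "sA (x * y) b = 0" if "b \<in> insert a F" for b
    proof (cases "b = a")
      case True then show ?thesis using J2 y by (simp flip: M.scale_scale)
    next
      case False then have "b \<in> F" using that by auto
      then show ?thesis using J1 x by (simp add: mult.commute[of x] flip: M.scale_scale)
    qed
    then show "x * y \<in> I" unfolding I_def by blast
  qed
  obtain J where "GV_ideal J" "J \<subseteq> I" using GV_mult[OF J1(1) J2(1)] IL pr by blast
  then show ?case unfolding I_def by blast
qed

lemma lincomb_sum:
  assumes "length c = length xs"
  shows "lincomb sc c xs = (\<Sum>i<length xs. sc (c ! i) (xs ! i))"
proof -
  have "lincomb sc c xs = (\<Sum>i = 0..<length xs. map2 sc c xs ! i)"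
    unfolding lincomb_def sum_list_sum_nth using assms by simp
  also have "\<dots> = (\<Sum>i<length xs. sc (c ! i) (xs ! i))"
    using assms by (intro sum.cong) auto
  finally show ?thesis .
qed

lemma span_coeffs:
  assumes mN: "module sN" and sp: "module.span sN (set xs) = UNIV"
  shows "\<exists>c. v = (\<Sum>i<length xs. sN (c i) (xs ! i))"
proof -
  interpret N: module sN by fact
  have "v \<in> N.span (set xs)" using sp by simp
  then show ?thesis
  proof (induction rule: N.span_induct_alt)
    case base
    show ?case by (intro exI[of _ "\<lambda>_. 0"]) simp
  next
    case (step a x y)
    then obtain c where c: "y = (\<Sum>i<length xs. sN (c i) (xs ! i))" by blast
    obtain i0 where i0: "i0 < length xs" "xs ! i0 = x" using step(1) by (auto simp: in_set_conv_nth)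
    define c' where "c' i = c i + (if i = i0 then a else 0)" for i
    have "(\<Sum>i<length xs. sN (c' i) (xs ! i)) = y + (\<Sum>i<length xs. if i = i0 then sN a (xs ! i) else 0)"
      unfolding c c'_def by (simp add: N.scale_left_distrib sum.distrib if_distrib[of "\<lambda>r. sN r _"] cong: if_cong)
    also have "\<dots> = sN a x + y" using i0 by (simp add: add.commute)
    finally show ?case by metis
  qed
qed

lemma module_ring: "module ((*) :: 'r::comm_ring_1 \<Rightarrow> 'r \<Rightarrow> 'r)"
  by unfold_locales (auto simp: algebra_simps)

lemma key:
  fixes sA :: "'r::comm_ring_1 \<Rightarrow> 'a::ab_group_add \<Rightarrow> 'a"
    and sN :: "'r \<Rightarrow> 'n::ab_group_add \<Rightarrow> 'n"
    and s2 :: "'r \<Rightarrow> 'p2::ab_group_add \<Rightarrow> 'p2" and d2 :: "'p2 \<Rightarrow> 'p1::ab_group_add"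
    and s1 :: "'r \<Rightarrow> 'p1 \<Rightarrow> 'p1" and d1 :: "'p1 \<Rightarrow> 'p0::ab_group_add"
    and s0 :: "'r \<Rightarrow> 'p0 \<Rightarrow> 'p0" and d0 :: "'p0 \<Rightarrow> 'n"
  assumes fp: "fin_presented sN" and res: "free_resolution2 s2 d2 s1 d1 s0 d0 sN"
    and mA: "module sA" and tA: "GV_torsion sA"
    and phi: "module_hom s1 sA \<phi>" and phi2: "\<And>x. \<phi> (d2 x) = 0"
  shows "\<exists>J. GV_ideal J \<and> (\<forall>j\<in>J. \<exists>\<psi>. module_hom s0 sA \<psi> \<and> (\<forall>x. sA j (\<phi> x) = \<psi> (d1 x)))"
proof -
  have fr0: "free_module s0" and hd1: "module_hom s1 s0 d1" and hd0: "module_hom s0 sN d0"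
    and sd0: "surj d0" and ex1: "range d1 = {x. d0 x = 0}" and ex2: "range d2 = {x. d1 x = 0}"
    using res unfolding free_resolution2_def by auto
  have m0: "module s0" and mN: "module sN" and m1: "module s1"
    using hd0 hd1 unfolding module_hom_iff by auto
  interpret D1: module_hom s1 s0 d1 by fact
  interpret D0: module_hom s0 sN d0 by fact
  interpret PH: module_hom s1 sA \<phi> by fact
  obtain B0 where ind0: "\<not> module.dependent s0 B0" and sp0: "module.span s0 B0 = UNIV"
    using fr0 unfolding free_module_def by auto
  obtain xs rels where spN: "module.span sN (set xs) = UNIV"
    and relsok: "\<forall>\<rho>\<in>set rels. length \<rho> = length xs \<and> lincomb sN \<rho> xs = 0"
    and compl: "\<forall>c. length c = length xs \<and> lincomb sN c xs = 0 \<longrightarrow>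
             (\<exists>a. length a = length rels \<and>
                  c = map (\<lambda>i. \<Sum>k<length rels. a ! k * (rels ! k) ! i) [0..<length xs])"
    using fp unfolding fin_presented_def by blast
  define m where "m = length xs"
  define nr where "nr = length rels"
  define p where "p i = (SOME q. d0 q = xs ! i)" for i
  have dp: "d0 (p i) = xs ! i" for i
  proof -
    from sd0 obtain q where "d0 q = xs ! i" by (metis surjD)
    then show ?thesis unfolding p_def by (rule someI)
  qed
  define cb where "cb b = (SOME c. d0 b = (\<Sum>i<m. sN (c i) (xs ! i)))" for b
  have dcb: "d0 b = (\<Sum>i<m. sN (cb b i) (xs ! i))" for b
    unfolding cb_def m_def using span_coeffs[OF mN spN, of "d0 b"] by (rule someI_ex)
  define \<chi> where "\<chi> i = ext_lin s0 (*) B0 (\<lambda>b. cb b i)" for i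
  have hchi: "module_hom s0 (*) (\<chi> i)" and chib: "\<And>b. b \<in> B0 \<Longrightarrow> \<chi> i b = cb b i" for i
    using ext_lin_hom[OF m0 module_ring ind0 sp0] unfolding \<chi>_def by auto
  interpret P00: module_pair s0 s0 by (simp add: module_pair_def m0)
  interpret P0N: module_pair s0 sN by (simp add: module_pair_def m0 mN)
  interpret P0A: module_pair s0 sA by (simp add: module_pair_def m0 mA)
  define L where "L x = (\<Sum>i<m. s0 (\<chi> i x) (p i))" for x
  have hL: "module_hom s0 s0 L"
    unfolding L_def[abs_def]
    by (intro P00.module_hom_sum P00.module_hom_compose_scale hchi) (simp add: m0)
  have d0L: "d0 (L x) = (\<Sum>i<m. sN (\<chi> i x) (xs ! i))" for x
    unfolding L_def by (simp add: D0.sum D0.scale dp)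
  have d0L2: "d0 (L x) = d0 x" for x
  proof (rule P0N.module_hom_eq_on_span[where B=B0])
    show "module_hom s0 sN (\<lambda>x. d0 (L x))" using module_hom_compose[OF hL hd0] by (simp add: comp_def)
    show "module_hom s0 sN d0" by fact
    show "x \<in> module.span s0 B0" using sp0 by simp
    fix b assume "b \<in> B0"
    then have "d0 (L b) = (\<Sum>i<m. sN (cb b i) (xs ! i))" by (simp add: d0L chib)
    then show "d0 (L b) = d0 b" using dcb[of b] by simp
  qed
  have hIL: "module_hom s0 s0 (\<lambda>x. x - L x)"
    by (intro P00.module_hom_sub hL) (simp add: module.module_hom_ident[OF m0])
  obtain Y where hY: "module_hom s0 s1 Y" and dY: "\<And>x. d1 (Y x) = x - L x"
  proof -
    have "\<exists>g. module_hom s0 s1 g \<and> (\<forall>x. d1 (g x) = x - L x)"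
    proof (rule lift_free[OF fr0 hIL hd1])
      fix x show "x - L x \<in> range d1" using ex1 d0L2 by (simp add: D0.diff)
    qed
    then show ?thesis using that by blast
  qed
  interpret YH: module_hom s0 s1 Y by fact
  define q where "q k = (\<Sum>i<m. s0 (rels ! k ! i) (p i))" for k
  have qin: "q k \<in> range d1" if k: "k < nr" for k
  proof -
    have len: "length (rels ! k) = length xs" and lc: "lincomb sN (rels ! k) xs = 0"
      using relsok k unfolding nr_def by auto
    have "d0 (q k) = lincomb sN (rels ! k) xs"
      unfolding q_def lincomb_sum[OF len] m_def by (simp add: D0.sum D0.scale dp)
    then show ?thesis using ex1 lc by simp
  qed
  define z where "z k = (SOME w. d1 w = q k)" for k
  have dz: "d1 (z k) = q k" if "k < nr" for k
    unfolding z_def using qin[OF that] by (metis (mono_tags) imageE someI)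
  obtain J where GJ: "GV_ideal J" and kJ: "\<forall>j\<in>J. \<forall>a\<in>(\<lambda>k. \<phi> (z k)) ` {..<nr}. sA j a = 0"
    using GV_kill[OF mA tA, of "(\<lambda>k. \<phi> (z k)) ` {..<nr}"] by auto
  have main: "sA j (\<phi> x) = sA j (\<phi> (Y (d1 x)))" if j: "j \<in> J" for j x
  proof -
    define u where "u = d1 x"
    define C where "C i = \<chi> i u" for i
    have d0u: "d0 u = 0" using ex1 unfolding u_def by auto
    have sumC: "(\<Sum>i<m. sN (C i) (xs ! i)) = 0" using d0L[of u] d0L2[of u] d0u unfolding C_def by simp
    define cl where "cl = map C [0..<m]"
    have lcl: "length cl = length xs" unfolding cl_def m_def by simp
    have "lincomb sN cl xs = 0" unfolding lincomb_sum[OF lcl] using sumC unfolding cl_def m_def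
      by (simp add: cl_def)
    then obtain a where la: "length a = nr"
      and cla: "cl = map (\<lambda>i. \<Sum>k<nr. a ! k * (rels ! k) ! i) [0..<m]"
      using compl lcl unfolding nr_def m_def by blast
    have Ci: "C i = (\<Sum>k<nr. a ! k * rels ! k ! i)" if "i < m" for i
    proof -
      have "cl ! i = C i" unfolding cl_def using that by simp
      moreover have "cl ! i = (\<Sum>k<nr. a ! k * rels ! k ! i)" using that by (subst cla) simp
      ultimately show ?thesis by simp
    qed
    have "L u = (\<Sum>i<m. s0 (\<Sum>k<nr. a ! k * rels ! k ! i) (p i))"
      unfolding L_def C_def[symmetric] using Ci by (intro sum.cong) auto
    also have "\<dots> = (\<Sum>i<m. \<Sum>k<nr. s0 (a ! k) (s0 (rels ! k ! i) (p i)))"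
      by (simp add: module.scale_sum_left[OF m0])
    also have "\<dots> = (\<Sum>k<nr. s0 (a ! k) (q k))"
      unfolding q_def by (subst sum.swap) (simp add: module.scale_sum_right[OF m0])
    also have "\<dots> = d1 (\<Sum>k<nr. s1 (a ! k) (z k))"
      by (simp add: D1.sum D1.scale dz)
    finally have Lu: "L u = d1 (\<Sum>k<nr. s1 (a ! k) (z k))" .
    define w where "w = x - Y u - (\<Sum>k<nr. s1 (a ! k) (z k))"
    have "d1 w = 0" unfolding w_def by (simp add: D1.diff dY Lu[symmetric] u_def)
    then have "w \<in> range d2" using ex2 by simp
    then have "\<phi> w = 0" using phi2 by auto
    then have "\<phi> x - \<phi> (Y u) - (\<Sum>k<nr. sA (a ! k) (\<phi> (z k))) = 0"
      unfolding w_def PH.diff PH.sum PH.scale .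
    then have "\<phi> x = \<phi> (Y u) + (\<Sum>k<nr. sA (a ! k) (\<phi> (z k)))"
      by (simp add: diff_diff_eq)
    then have "sA j (\<phi> x) = sA j (\<phi> (Y u)) + (\<Sum>k<nr. sA (a ! k) (sA j (\<phi> (z k))))"
      by (simp add: module.scale_right_distrib[OF mA] module.scale_sum_right[OF mA] mult.commute)
    also have "(\<Sum>k<nr. sA (a ! k) (sA j (\<phi> (z k)))) = 0"
      using kJ j by (intro sum.neutral) auto
    finally show ?thesis unfolding u_def by simp
  qed
  have "\<exists>\<psi>. module_hom s0 sA \<psi> \<and> (\<forall>x. sA j (\<phi> x) = \<psi> (d1 x))" if "j \<in> J" for j
  proof (intro exI conjI allI)
    show "module_hom s0 sA (\<lambda>u. sA j (\<phi> (Y u)))"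
      using P0A.module_hom_scale[OF module_hom_compose[OF hY phi]] by (simp add: comp_def)
    fix x show "sA j (\<phi> x) = sA j (\<phi> (Y (d1 x)))" by (rule main[OF that])
  qed
  then show ?thesis using GJ by blast
qed

theorem lemma2p3:
  fixes sA :: "'r::comm_ring_1 \<Rightarrow> 'a::ab_group_add \<Rightarrow> 'a"
    and sN :: "'r \<Rightarrow> 'n::ab_group_add \<Rightarrow> 'n"
    and s2 :: "'r \<Rightarrow> 'p2::ab_group_add \<Rightarrow> 'p2" and d2 :: "'p2 \<Rightarrow> 'p1::ab_group_add"
    and s1 :: "'r \<Rightarrow> 'p1 \<Rightarrow> 'p1" and d1 :: "'p1 \<Rightarrow> 'p0::ab_group_add"
    and s0 :: "'r \<Rightarrow> 'p0 \<Rightarrow> 'p0" and d0 :: "'p0 \<Rightarrow> 'n"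
  assumes "module sA"
    and "GV_torsion sA"
  shows "abs_w_pure_wrt sA s2 d2 s1 d1 s0 d0 sN"
  unfolding abs_w_pure_wrt_def
proof (intro impI)
  assume H: "fin_presented sN \<and> free_resolution2 s2 d2 s1 d1 s0 d0 sN"
  have mA: "module sA" by fact
  have m0: "module s0" using H unfolding free_resolution2_def free_module_def by auto
  interpret P0A: module_pair s0 sA by (simp add: module_pair_def m0 mA)
  let ?Bd = "ext1_coboundaries d1 s0 sA"
  show "GV_torsion_on (Ext1 d2 s1 d1 s0 sA) (Ext1_zero d1 s0 sA) (Ext1_scale d1 s0 sA)"
    unfolding GV_torsion_on_def
  proof
    fix C assume "C \<in> Ext1 d2 s1 d1 s0 sA"
    then obtain \<phi> where phi: "\<phi> \<in> ext1_cocycles d2 s1 sA" and C: "C = ext1_coset ?Bd \<phi>"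
      unfolding Ext1_def by auto
    have hphi: "module_hom s1 sA \<phi>" and phi2: "\<And>x. \<phi> (d2 x) = 0"
      using phi unfolding ext1_cocycles_def by auto
    obtain J where GJ: "GV_ideal J"
      and JJ: "\<forall>j\<in>J. \<exists>\<psi>. module_hom s0 sA \<psi> \<and> (\<forall>x. sA j (\<phi> x) = \<psi> (d1 x))"
      using key[of sN s2 d2 s1 d1 s0 d0 sA \<phi>] H \<open>module sA\<close> \<open>GV_torsion sA\<close> hphi phi2 by blast
    have "Ext1_scale d1 s0 sA j C = Ext1_zero d1 s0 sA" if j: "j \<in> J" for j
    proof -
      obtain \<psi> where hpsi: "module_hom s0 sA \<psi>" and psi: "\<And>x. sA j (\<phi> x) = \<psi> (d1 x)"
        using JJ j by blast
      show ?thesis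
      proof
        show "Ext1_scale d1 s0 sA j C \<subseteq> Ext1_zero d1 s0 sA"
        proof
          fix g assume "g \<in> Ext1_scale d1 s0 sA j C"
          then obtain \<phi>' \<beta> where ph': "\<phi>' \<in> C" and b: "\<beta> \<in> ?Bd" and g: "g = (\<lambda>x. sA j (\<phi>' x) + \<beta> x)"
            unfolding Ext1_scale_def by auto
          obtain \<beta>' where b': "\<beta>' \<in> ?Bd" and ph'': "\<phi>' = (\<lambda>x. \<phi> x + \<beta>' x)"
            using ph' unfolding C ext1_coset_def by auto
          obtain \<psi>1 where h1: "module_hom s0 sA \<psi>1" and b1: "\<beta>' = \<psi>1 \<circ> d1"
            using b' unfolding ext1_coboundaries_def by auto
          obtain \<psi>2 where h2: "module_hom s0 sA \<psi>2" and b2: "\<beta> = \<psi>2 \<circ> d1"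
            using b unfolding ext1_coboundaries_def by auto
          have "g = (\<lambda>u. \<psi> u + sA j (\<psi>1 u) + \<psi>2 u) \<circ> d1"
            unfolding g ph'' b1 b2 comp_def
            by (rule ext) (simp add: module.scale_right_distrib[OF mA] psi)
          moreover have "module_hom s0 sA (\<lambda>u. \<psi> u + sA j (\<psi>1 u) + \<psi>2 u)"
            by (intro P0A.module_hom_add P0A.module_hom_scale hpsi h1 h2)
          ultimately show "g \<in> Ext1_zero d1 s0 sA"
            unfolding Ext1_zero_def ext1_coboundaries_def by blast
        qed
      next
        show "Ext1_zero d1 s0 sA \<subseteq> Ext1_scale d1 s0 sA j C"
        proof
          fix g assume "g \<in> Ext1_zero d1 s0 sA"
          then obtain \<psi>2 where h2: "module_hom s0 sA \<psi>2" and g: "g = \<psi>2 \<circ> d1"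
            unfolding Ext1_zero_def ext1_coboundaries_def by auto
          have z: "(\<lambda>u. 0) \<circ> d1 \<in> ?Bd"
            unfolding ext1_coboundaries_def using P0A.module_hom_zero by blast
          have "\<phi> = (\<lambda>x. \<phi> x + ((\<lambda>u. 0) \<circ> d1) x)" by simp
          then have phC: "\<phi> \<in> C" unfolding C ext1_coset_def using z by blast
          have bb: "(\<lambda>u. \<psi>2 u - \<psi> u) \<circ> d1 \<in> ?Bd"
            unfolding ext1_coboundaries_def using P0A.module_hom_sub[OF h2 hpsi] by blast
          have "g = (\<lambda>x. sA j (\<phi> x) + ((\<lambda>u. \<psi>2 u - \<psi> u) \<circ> d1) x)"
            unfolding g by (rule ext) (simp add: psi)
          then show "g \<in> Ext1_scale d1 s0 sA j C"
            unfolding Ext1_scale_def using phC bb by blast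
        qed
      qed
    qed
    then show "\<exists>J. GV_ideal J \<and> (\<forall>j\<in>J. Ext1_scale d1 s0 sA j C = Ext1_zero d1 s0 sA)"
      using GJ by blast
  qed
qed

end
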